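(* There is an absolute constant $C>0$ such that the following holds. Let $\pi\in(0,1)$ and $\delta:=\pi/(C\max\{1,\log(1/\pi)\})$. Suppose the Robust protocol (described in the context) is run with parameters for which it has per-round $(\varepsilon,\delta)$ accuracy. Then it has $(\varepsilon,\pi)$ per-event-index accuracy: for every event index $n\ge1$ and every event stream, $\Pr[|\hat n(n)-n|>\varepsilon n]\le\pi$.
   Context: Distributed counting: a server and $k$ sites; events arrive one at a time, each at some site; $n_i$ is the number of events at site $i$ so far and the event count is $n=\sum_in_i$. Robust protocol with parameters $k$, $\varepsilon>0$, $c\ge1$: each site $i$ keeps a transmission probability $p$ (initially $1$, updated by server broadcasts) and its count $n_i$. On each event at site $i$: $n_i\gets n_i+1$, and independently with probability $p$ the site sends ReportSample to the server. On receiving CountRequest, site $i$ sends its current $n_i$. The server keeps a counter $B=0$, values $\bar n_i=0$, and $p=1$; its estimate is $\hat n=\bar n+B/p$ with $\bar n=\sum_i\bar n_i$. On receiving ReportSample the server sets $B\gets B+1$; if now $B=k$, the round ends and a new round begins: the server broadcasts CountRequest, sets each $\bar n_i$ to the reported exact $n_i$, sets $p\gets\min\{1,c\sqrt k/(\varepsilon\bar n)\}$, broadcasts $p$, and sets $B\gets0$. $\hat n(n)$ is the estimate right after the $n$-th event. Per-round $(\varepsilon,\delta)$ accuracy means: for each round, independently of the history before it starts, with probability at least $1-\delta$ the relative error $|\hat n(n)-n|/n$ is at most $\varepsilon$ at every event index $n$ that falls in that round. *)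

theory Defs
  imports "HOL-Probability.Probability"
begin

text \<open>Joint state of the Robust protocol (sites and server; messages are delivered
synchronously, so every site's p equals the server's p).
  cnt i   : exact count n_i at site i
  nb i    : server's value nbar_i
  sB      : server counter B
  sp      : current transmission probability p
  fresh   : a new round has just begun (initially, or the last event ended a round)\<close>
record rstate =
  cnt :: "nat \<Rightarrow> nat"
  nb :: "nat \<Rightarrow> nat"
  sB :: nat
  sp :: real
  fresh :: bool

definition rinit :: rstate where
  "rinit = \<lparr>cnt = (\<lambda>_. 0), nb = (\<lambda>_. 0), sB = 0, sp = 1, fresh = True\<rparr>"

definition rest :: "nat \<Rightarrow> rstate \<Rightarrow> real" where
  "rest k \<sigma> = real (\<Sum>i<k. nb \<sigma> i) + real (sB \<sigma>) / sp \<sigma>"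

definition rstep :: "nat \<Rightarrow> real \<Rightarrow> real \<Rightarrow> nat \<Rightarrow> rstate \<Rightarrow> rstate pmf" where
  "rstep k eps c i \<sigma> =
     (let cnt' = (cnt \<sigma>)(i := cnt \<sigma> i + 1) in
      map_pmf (\<lambda>b.
        if \<not> b then \<sigma>\<lparr>cnt := cnt', fresh := False\<rparr>
        else if sB \<sigma> + 1 = k then
          \<lparr>cnt = cnt', nb = cnt', sB = 0,
           sp = min 1 (c * sqrt (real k) / (eps * real (\<Sum>j<k. cnt' j))),
           fresh = True\<rparr>
        else \<sigma>\<lparr>cnt := cnt', sB := sB \<sigma> + 1, fresh := False\<rparr>)
      (bernoulli_pmf (sp \<sigma>)))"

text \<open>Event stream: the j-th event (j >= 1) arrives at site s j.\<close>
definition valid_stream :: "nat \<Rightarrow> (nat \<Rightarrow> nat) \<Rightarrow> bool" where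
  "valid_stream k s \<longleftrightarrow> (\<forall>j\<ge>1. s j < k)"

fun rrun :: "nat \<Rightarrow> real \<Rightarrow> real \<Rightarrow> (nat \<Rightarrow> nat) \<Rightarrow> nat \<Rightarrow> rstate pmf" where
  "rrun k eps c s 0 = return_pmf rinit"
| "rrun k eps c s (Suc n) = bind_pmf (rrun k eps c s n) (rstep k eps c (s (Suc n)))"

text \<open>Starting in state sigma right after event m, the distribution of the list of
states right after events m+1, ..., m+N.\<close>
fun rtraj :: "nat \<Rightarrow> real \<Rightarrow> real \<Rightarrow> (nat \<Rightarrow> nat) \<Rightarrow> nat \<Rightarrow> rstate \<Rightarrow> nat \<Rightarrow> rstate list pmf" where
  "rtraj k eps c s m \<sigma> 0 = return_pmf []"
| "rtraj k eps c s m \<sigma> (Suc N) =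
     bind_pmf (rstep k eps c (s (Suc m)) \<sigma>)
       (\<lambda>\<sigma>'. map_pmf (Cons \<sigma>') (rtraj k eps c s (Suc m) \<sigma>' N))"

text \<open>For a round starting right after event m, trajectory ts: every event index m+j+1
falling in that round (no earlier event of ts ended the round) has relative error <= eps.\<close>
definition round_good :: "nat \<Rightarrow> real \<Rightarrow> nat \<Rightarrow> rstate list \<Rightarrow> bool" where
  "round_good k eps m ts \<longleftrightarrow>
     (\<forall>j<length ts. (\<forall>i<j. \<not> fresh (ts ! i)) \<longrightarrow>
        \<bar>rest k (ts ! j) - real (m + j + 1)\<bar> \<le> eps * real (m + j + 1))"

text \<open>Per-round (eps,delta) accuracy: for every stream, every round, conditioned on any
(positive-probability) history up to the round start -- by the Markov property, on the
state at the round start -- with probability >= 1 - delta every event index of the round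
has relative error <= eps.  Finite horizons N are quantified over (equivalent to the
infinite-horizon event by continuity of measure).\<close>
definition per_round_accurate :: "nat \<Rightarrow> real \<Rightarrow> real \<Rightarrow> real \<Rightarrow> bool" where
  "per_round_accurate k eps c \<delta> \<longleftrightarrow>
     (\<forall>s m \<sigma> N. valid_stream k s \<longrightarrow> \<sigma> \<in> set_pmf (rrun k eps c s m) \<longrightarrow> fresh \<sigma> \<longrightarrow>
        measure_pmf.prob (rtraj k eps c s m \<sigma> N) {ts. round_good k eps m ts} \<ge> 1 - \<delta>)"

end

theory Submission
  imports Defs
begin
lemma prob_bind_pmf: "measure_pmf.prob (bind_pmf M N) X = (\<integral>x. measure_pmf.prob (N x) X \<partial>M)"
proof -
  have "ennreal (measure_pmf.prob (bind_pmf M N) X) = (\<integral>\<^sup>+x. ennreal (measure_pmf.prob (N x) X) \<partial>M)"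
    by (simp add: measure_pmf.emeasure_eq_measure[symmetric])
  also have "\<dots> = ennreal (\<integral>x. measure_pmf.prob (N x) X \<partial>M)"
    by (intro nn_integral_eq_integral measure_pmf.integrable_const_bound[where B=1]) auto
  finally show ?thesis by (simp add: integral_nonneg_AE)
qed

lemma prob_le_on_support:
  assumes "A \<inter> set_pmf p \<subseteq> B"
  shows "measure_pmf.prob p A \<le> measure_pmf.prob p B"
proof -
  have "measure_pmf.prob p A = measure_pmf.prob p (A \<inter> set_pmf p)" by (simp add: measure_Int_set_pmf)
  also have "\<dots> \<le> measure_pmf.prob p B" using assms by (intro measure_pmf.finite_measure_mono) auto
  finally show ?thesis .
qed

lemma integral_mono_pmf:
  fixes f g :: "'a \<Rightarrow> real"
  assumes "finite (set_pmf p)" "\<And>x. x \<in> set_pmf p \<Longrightarrow> f x \<le> g x"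
  shows "(\<integral>x. f x \<partial>p) \<le> (\<integral>x. g x \<partial>p)"
  using assms by (intro integral_mono_AE integrable_measure_pmf_finite) (auto simp: AE_measure_pmf_iff)

definition lastst :: "rstate \<Rightarrow> rstate list \<Rightarrow> rstate" where
  "lastst \<sigma> ts = (if ts = [] then \<sigma> else last ts)"

lemma lastst_Cons[simp]: "lastst \<sigma> (x # ts) = lastst x ts"
  by (simp add: lastst_def)
lemma lastst_Nil[simp]: "lastst \<sigma> [] = \<sigma>"
  by (simp add: lastst_def)
lemma lastst_append: "lastst \<sigma> (ts @ us) = lastst (lastst \<sigma> ts) us"
  by (simp add: lastst_def)

definition st :: "rstate list \<Rightarrow> nat \<Rightarrow> rstate" where
  "st ts i = (if i = 0 then rinit else ts ! (i - 1))"

lemma st_app_le: "length ts = m \<Longrightarrow> i \<le> m \<Longrightarrow> st (ts @ us) i = st ts i"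
  by (auto simp: st_def nth_append)

lemma st_app_gt: "length ts = m \<Longrightarrow> m < i \<Longrightarrow> st (ts @ us) i = us ! (i - m - 1)"
  by (auto simp: st_def nth_append)

lemma st_last: "length ts = m \<Longrightarrow> st ts m = lastst rinit ts"
  by (cases ts rule: rev_cases) (auto simp: st_def lastst_def nth_append)

lemma prob_cong_supp:
  assumes "\<And>x. x \<in> set_pmf p \<Longrightarrow> x \<in> A \<longleftrightarrow> x \<in> B"
  shows "measure_pmf.prob p A = measure_pmf.prob p B"
  using assms by (intro antisym prob_le_on_support) auto

lemma choose_a:
  fixes n :: nat and L K :: real
  assumes n1: "n \<ge> 1" and Lp: "L > 0" and K0: "K \<ge> 0"
  shows "\<exists>a<n. (1 \<le> a \<longrightarrow> K \<le> real (n-1-a) * min 1 (L / real a)) \<and>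
                real (n-a) * min 1 (L / real (Suc a)) \<le> K + 2"
proof -
  define S where "S = {a. 1 \<le> a \<and> a < n \<and> K \<le> real (n-1-a) * min 1 (L / real a)}"
  have finS: "finite S" unfolding S_def by auto
  have m1: "min 1 x \<le> 1" for x :: real by simp
  show ?thesis
  proof (cases "S = {}")
    case True
    show ?thesis
    proof (intro exI[of _ 0] conjI)
      show "0 < n" using n1 by simp
      show "1 \<le> (0::nat) \<longrightarrow> K \<le> real (n - 1 - 0) * min 1 (L / real 0)" by simp
      show "real (n - 0) * min 1 (L / real (Suc 0)) \<le> K + 2"
      proof (cases "n = 1")
        case True then show ?thesis using K0 by simp
      next
        case False
        then have "1 \<notin> S" "1 < n" using \<open>S = {}\<close> n1 by auto
        then have "real (n-2) * min 1 L < K" unfolding S_def by (auto simp: not_le)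
        moreover have "real n = real (n-2) + 2" using \<open>1 < n\<close> by simp
        then have "real n * min 1 L = real (n-2) * min 1 L + 2 * min 1 L" by (simp only: distrib_right)
        moreover have "min 1 L \<le> 1" by simp
        ultimately show ?thesis by simp
      qed
    qed
  next
    case False
    define a where "a = Max S"
    have aS: "a \<in> S" unfolding a_def using False finS by simp
    have amax: "\<And>b. b \<in> S \<Longrightarrow> b \<le> a" unfolding a_def using finS by simp
    show ?thesis
    proof (intro exI[of _ a] conjI)
      show "a < n" using aS unfolding S_def by simp
      show "1 \<le> a \<longrightarrow> K \<le> real (n - 1 - a) * min 1 (L / real a)" using aS unfolding S_def by (simp del: of_nat_diff)
      show "real (n - a) * min 1 (L / real (Suc a)) \<le> K + 2"
      proof (cases "Suc a < n")
        case True
        then have "Suc a \<notin> S" using amax by fastforce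
        then have "real (n-1-Suc a) * min 1 (L / real (Suc a)) < K" using True unfolding S_def by (auto simp: not_le)
        moreover have "real (n - a) = real (n-1-Suc a) + 2" using True by simp
        then have "real (n - a) * min 1 (L / real (Suc a)) = real (n-1-Suc a) * min 1 (L / real (Suc a)) + 2 * min 1 (L / real (Suc a))"
          by (simp only: distrib_right)
        moreover have "min 1 (L / real (Suc a)) \<le> 1" by simp
        ultimately show ?thesis by linarith
      next
        case False
        then have "n - a = 1" using \<open>a < n\<close> by simp
        then show ?thesis using K0 by simp
      qed
    qed
  qed
qed

locale rob =
  fixes k :: nat and eps c :: real and s :: "nat \<Rightarrow> nat"
  assumes k1: "k \<ge> 1" and epsp: "eps > 0" and c1: "c \<ge> 1" and vs: "valid_stream k s"
begin

abbreviation "T \<equiv> rtraj k eps c s"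
abbreviation "R \<equiv> rrun k eps c s"

definition stepf :: "nat \<Rightarrow> rstate \<Rightarrow> bool \<Rightarrow> rstate" where
  "stepf i \<sigma> b =
     (let cnt' = (cnt \<sigma>)(i := cnt \<sigma> i + 1) in
        if \<not> b then \<sigma>\<lparr>cnt := cnt', fresh := False\<rparr>
        else if sB \<sigma> + 1 = k then
          \<lparr>cnt = cnt', nb = cnt', sB = 0,
           sp = min 1 (c * sqrt (real k) / (eps * real (\<Sum>j<k. cnt' j))),
           fresh = True\<rparr>
        else \<sigma>\<lparr>cnt := cnt', sB := sB \<sigma> + 1, fresh := False\<rparr>)"

lemma rstep_eq: "rstep k eps c i \<sigma> = map_pmf (stepf i \<sigma>) (bernoulli_pmf (sp \<sigma>))"
  unfolding rstep_def stepf_def Let_def by simp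

lemma len_T: "ts \<in> set_pmf (T m \<sigma> N) \<Longrightarrow> length ts = N"
  by (induction N arbitrary: m \<sigma> ts) auto

lemma fin_T: "finite (set_pmf (T m \<sigma> N))"
proof (induction N arbitrary: m \<sigma>)
  case 0 then show ?case by simp
next
  case (Suc N)
  have "finite (set_pmf (rstep k eps c (s (Suc m)) \<sigma>))"
    by (simp add: rstep_eq)
  then show ?case using Suc by simp
qed

lemma split_T: "T m \<sigma> (N1 + N2) =
   bind_pmf (T m \<sigma> N1) (\<lambda>ts. map_pmf (\<lambda>us. ts @ us) (T (m + N1) (lastst \<sigma> ts) N2))"
proof (induction N1 arbitrary: m \<sigma>)
  case 0 then show ?case by (simp add: bind_return_pmf map_pmf_ident[unfolded id_def] cong: map_pmf_cong)
next
  case (Suc N1)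
  have e: "\<And>a b. (@) (a # b) = (\<lambda>c. a # b @ c)" by auto
  show ?case
    by (simp add: e Suc bind_assoc_pmf map_bind_pmf bind_map_pmf map_pmf_comp bind_return_pmf)
qed

lemma R_eq: "R n = map_pmf (lastst rinit) (T 0 rinit n)"
proof (induction n)
  case 0 then show ?case by simp
next
  case (Suc n)
  have eq: "T 0 rinit (Suc n) = bind_pmf (T 0 rinit n) (\<lambda>ts. map_pmf (\<lambda>us. ts @ us) (T n (lastst rinit ts) (Suc 0)))"
    using split_T[of 0 rinit n 1] by (simp only: Suc_eq_plus1 add_0)
  have "map_pmf (lastst rinit) (T 0 rinit (Suc n)) =
     bind_pmf (T 0 rinit n) (\<lambda>ts. rstep k eps c (s (Suc n)) (lastst rinit ts))"
    unfolding eq by (simp add: map_bind_pmf map_pmf_comp bind_return_pmf lastst_append bind_return_pmf')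
  also have "\<dots> = R (Suc n)" by (simp add: Suc bind_map_pmf)
  finally show ?case by simp
qed

lemma T_Suc_bern: "T j \<sigma> (Suc N) = bind_pmf (bernoulli_pmf (sp \<sigma>))
    (\<lambda>b. map_pmf (Cons (stepf (s (Suc j)) \<sigma> b)) (T (Suc j) (stepf (s (Suc j)) \<sigma> b) N))"
  by (simp add: rstep_eq bind_map_pmf)

lemma prob_T_Suc:
  assumes "0 \<le> sp \<sigma>" "sp \<sigma> \<le> 1"
  shows "measure_pmf.prob (T j \<sigma> (Suc N)) A =
    sp \<sigma> * measure_pmf.prob (T (Suc j) (stepf (s (Suc j)) \<sigma> True) N) {us. stepf (s (Suc j)) \<sigma> True # us \<in> A}
  + (1 - sp \<sigma>) * measure_pmf.prob (T (Suc j) (stepf (s (Suc j)) \<sigma> False) N) {us. stepf (s (Suc j)) \<sigma> False # us \<in> A}"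
  unfolding T_Suc_bern prob_bind_pmf using assms
  by (simp add: vimage_def mult.commute)

definition inv :: "nat \<Rightarrow> rstate \<Rightarrow> bool" where
  "inv j \<sigma> \<longleftrightarrow> (\<Sum>i<k. cnt \<sigma> i) = j \<and> sB \<sigma> < k \<and> sp \<sigma> \<le> 1 \<and>
     min 1 (c * sqrt (real k) / eps / real (max 1 j)) \<le> sp \<sigma>"

lemma inv_init: "inv 0 rinit"
  using k1 by (simp add: inv_def rinit_def)

lemma sum_upd: "x < k \<Longrightarrow> (\<Sum>i<k. ((f::nat\<Rightarrow>nat)(x := f x + 1)) i) = (\<Sum>i<k. f i) + 1"
proof -
  assume x: "x < k"
  have "(\<Sum>i<k. (f(x := f x + 1)) i) = (\<Sum>i<k. f i + (if i = x then 1 else 0))"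
    by (intro sum.cong) auto
  also have "\<dots> = (\<Sum>i<k. f i) + 1" using x by (simp add: sum.distrib)
  finally show ?thesis .
qed

lemma inv_sp_nonneg: "inv j \<sigma> \<Longrightarrow> 0 \<le> sp \<sigma>"
proof -
  assume "inv j \<sigma>"
  moreover have "0 \<le> min 1 (c * sqrt (real k) / eps / real (max 1 j))"
    using c1 epsp by simp
  ultimately show ?thesis unfolding inv_def by linarith
qed

lemma inv_step:
  assumes "inv j \<sigma>"
  shows "inv (Suc j) (stepf (s (Suc j)) \<sigma> b)"
proof -
  have sk: "s (Suc j) < k" using vs by (simp add: valid_stream_def)
  let ?L = "c * sqrt (real k) / eps"
  have Lp: "?L > 0" using c1 epsp k1 by simp
  have sum: "(\<Sum>i<k. ((cnt \<sigma>)(s (Suc j) := cnt \<sigma> (s (Suc j)) + 1)) i) = Suc j"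
    using sum_upd[OF sk] assms by (simp add: inv_def)
  have mono: "min 1 (?L / real (max 1 (Suc j))) \<le> min 1 (?L / real (max 1 j))"
  proof -
    have "?L / real (max 1 (Suc j)) \<le> ?L / real (max 1 j)"
      by (rule divide_left_mono) (use Lp in \<open>auto simp: max_def\<close>)
    then show ?thesis by (intro min.mono) auto
  qed
  have eqL: "c * sqrt (real k) / (eps * real (Suc j)) = ?L / real (max 1 (Suc j))"
    by simp
  show ?thesis
    using assms sum mono k1 unfolding inv_def stepf_def Let_def
    by (auto simp: eqL)
qed

lemma R_inv: "\<sigma> \<in> set_pmf (R n) \<Longrightarrow> inv n \<sigma>"
proof (induction n arbitrary: \<sigma>)
  case 0 then show ?case by (simp add: inv_init)
next
  case (Suc n)
  then show ?case by (auto simp: rstep_eq intro: inv_step)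
qed

lemma stepf_False[simp]:
  "sB (stepf i \<sigma> False) = sB \<sigma>" "sp (stepf i \<sigma> False) = sp \<sigma>" "fresh (stepf i \<sigma> False) = False"
  by (simp_all add: stepf_def Let_def)

lemma stepf_True_noend:
  "sB \<sigma> + 1 \<noteq> k \<Longrightarrow> sB (stepf i \<sigma> True) = sB \<sigma> + 1"
  "sB \<sigma> + 1 \<noteq> k \<Longrightarrow> sp (stepf i \<sigma> True) = sp \<sigma>"
  "sB \<sigma> + 1 \<noteq> k \<Longrightarrow> fresh (stepf i \<sigma> True) = False"
  by (simp_all add: stepf_def Let_def)

lemma stepf_True_end:
  "sB \<sigma> + 1 = k \<Longrightarrow> sB (stepf i \<sigma> True) = 0"
  "sB \<sigma> + 1 = k \<Longrightarrow> fresh (stepf i \<sigma> True) = True"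
  by (simp_all add: stepf_def Let_def)

lemma stepf_True_end_sp:
  assumes "sB \<sigma> + 1 = k" "inv j \<sigma>"
  shows "sp (stepf (s (Suc j)) \<sigma> True) = min 1 (c * sqrt (real k) / eps / real (Suc j))"
proof -
  have sk: "s (Suc j) < k" using vs by (simp add: valid_stream_def)
  have sum: "(\<Sum>i<k. ((cnt \<sigma>)(s (Suc j) := cnt \<sigma> (s (Suc j)) + 1)) i) = Suc j"
    using sum_upd[OF sk] assms by (simp add: inv_def)
  show ?thesis using assms(1) unfolding stepf_def Let_def sum by simp
qed

lemma all_less_Suc_Cons: "(\<forall>i<Suc n. P ((x # us) ! i)) \<longleftrightarrow> P x \<and> (\<forall>i<n. P (us ! i))"
  by (auto simp: less_Suc_eq_0_disj)

lemma set_nf_Cons: "{us. \<forall>i<Suc n. \<not> fresh ((x # us) ! i)} = (if fresh x then {} else {us. \<forall>i<n. \<not> fresh (us ! i)})"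
  by (auto simp: less_Suc_eq_0_disj)

lemma chern:
  assumes "0 \<le> r" "r \<le> 1"
  shows "T' \<le> N \<Longrightarrow> sB \<sigma> < k \<Longrightarrow> r \<le> sp \<sigma> \<Longrightarrow> sp \<sigma> \<le> 1 \<Longrightarrow>
    measure_pmf.prob (T j \<sigma> N) {us. \<forall>i<T'. \<not> fresh (us ! i)} \<le> (1/2)^(sB \<sigma>) * 2^(k-1) * (1 - r/2)^T'"
proof (induction N arbitrary: T' j \<sigma>)
  case 0
  have "(2::real)^(sB \<sigma>) \<le> 2^(k-1)" using 0 by (intro power_increasing) auto
  then have "1 \<le> (1/2::real)^(sB \<sigma>) * 2^(k-1)" by (simp add: power_one_over field_simps)
  then show ?case using 0 by simp
next
  case (Suc N)
  have base: "1 \<le> (1/2::real)^(sB \<sigma>) * 2^(k-1)"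
  proof -
    have "(2::real)^(sB \<sigma>) \<le> 2^(k-1)" using Suc by (intro power_increasing) auto
    then show ?thesis by (simp add: power_one_over field_simps)
  qed
  show ?case
  proof (cases T')
    case 0 then show ?thesis using base by (simp add: measure_pmf.prob_le_1 order_trans[OF measure_pmf.prob_le_1])
  next
    case (Suc T'')
    let ?X = "(1/2::real)^(sB \<sigma>) * 2^(k-1) * (1 - r/2)^T''"
    let ?sT = "stepf (s (Suc j)) \<sigma> True" and ?sF = "stepf (s (Suc j)) \<sigma> False"
    let ?A = "{us. \<forall>i<T'. \<not> fresh (us ! i)}"
    have p0: "0 \<le> sp \<sigma>" using Suc.prems assms by linarith
    have F: "measure_pmf.prob (T (Suc j) ?sF N) {us. ?sF # us \<in> ?A} \<le> ?X"
      using Suc.IH[of T'' ?sF "Suc j"] Suc.prems \<open>T' = Suc T''\<close> by (simp add: set_nf_Cons)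
    have Tb: "measure_pmf.prob (T (Suc j) ?sT N) {us. ?sT # us \<in> ?A} \<le> ?X / 2"
    proof (cases "sB \<sigma> + 1 = k")
      case True
      then have e: "{us. ?sT # us \<in> ?A} = {}" using \<open>T' = Suc T''\<close>
        by (simp add: set_nf_Cons stepf_True_end)
      have "0 \<le> ?X" using assms by simp
      then show ?thesis unfolding e by simp
    next
      case False
      have "measure_pmf.prob (T (Suc j) ?sT N) {us. ?sT # us \<in> ?A} \<le> (1/2)^(sB \<sigma> + 1) * 2^(k-1) * (1 - r/2)^T''"
        using Suc.IH[of T'' ?sT "Suc j"] Suc.prems \<open>T' = Suc T''\<close> False
        by (simp add: set_nf_Cons stepf_True_noend)
      then show ?thesis by simp
    qed
    have X0: "0 \<le> ?X" using assms by simp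
    have "measure_pmf.prob (T j \<sigma> (Suc N)) ?A \<le> sp \<sigma> * (?X/2) + (1 - sp \<sigma>) * ?X"
      unfolding prob_T_Suc[OF p0 Suc.prems(4)]
      using Tb F p0 Suc.prems(4) by (intro add_mono mult_left_mono) auto
    also have "\<dots> = ?X * (1 - sp \<sigma> / 2)" by (simp add: field_simps)
    also have "\<dots> \<le> ?X * (1 - r/2)" using X0 Suc.prems by (intro mult_left_mono) auto
    also have "\<dots> = (1/2)^(sB \<sigma>) * 2^(k-1) * (1 - r/2)^T'" using \<open>T' = Suc T''\<close> by simp
    finally show ?thesis .
  qed
qed

definition V :: "nat \<Rightarrow> rstate \<Rightarrow> nat \<Rightarrow> real" where
  "V j \<sigma> N = (\<Sum>i<N. measure_pmf.prob (T j \<sigma> N) {us. fresh (us ! i)})"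

lemma V_nonneg: "0 \<le> V j \<sigma> N"
  unfolding V_def by (intro sum_nonneg) auto

lemma set_fr_Cons0: "{us. fresh ((x # us) ! 0)} = (if fresh x then UNIV else {})"
  by auto

lemma sumCons: "(\<Sum>i<Suc N. measure_pmf.prob Q {us. fresh ((x # us) ! i)}) =
   (if fresh x then 1 else 0) + (\<Sum>i<N. measure_pmf.prob Q {us. fresh (us ! i)})"
  by (subst sum.lessThan_Suc_shift) simp

lemma V_Suc:
  assumes "0 \<le> sp \<sigma>" "sp \<sigma> \<le> 1"
  shows "V j \<sigma> (Suc N) =
    sp \<sigma> * ((if fresh (stepf (s (Suc j)) \<sigma> True) then 1 else 0) + V (Suc j) (stepf (s (Suc j)) \<sigma> True) N)
  + (1 - sp \<sigma>) * ((if fresh (stepf (s (Suc j)) \<sigma> False) then 1 else 0) + V (Suc j) (stepf (s (Suc j)) \<sigma> False) N)" (is "_ = ?rhs")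
proof -
  let ?sT = "stepf (s (Suc j)) \<sigma> True" and ?sF = "stepf (s (Suc j)) \<sigma> False"
  have "V j \<sigma> (Suc N) = (\<Sum>i<Suc N.
     sp \<sigma> * measure_pmf.prob (T (Suc j) ?sT N) {us. fresh ((?sT # us) ! i)}
   + (1 - sp \<sigma>) * measure_pmf.prob (T (Suc j) ?sF N) {us. fresh ((?sF # us) ! i)})"
    unfolding V_def by (intro sum.cong refl) (subst prob_T_Suc[OF assms], simp)
  also have "\<dots> = sp \<sigma> * (\<Sum>i<Suc N. measure_pmf.prob (T (Suc j) ?sT N) {us. fresh ((?sT # us) ! i)})
     + (1 - sp \<sigma>) * (\<Sum>i<Suc N. measure_pmf.prob (T (Suc j) ?sF N) {us. fresh ((?sF # us) ! i)})"
    by (simp only: sum.distrib sum_distrib_left)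
  also have "\<dots> = ?rhs" unfolding sumCons V_def by simp
  finally show ?thesis .
qed

lemma comb: "0 \<le> (p::real) \<Longrightarrow> p \<le> 1 \<Longrightarrow> x \<le> X \<Longrightarrow> y \<le> Y \<Longrightarrow> p * x + (1 - p) * y \<le> p * X + (1 - p) * Y"
  by (intro add_mono mult_left_mono) auto

lemma sp_end_le:
  assumes "sB \<sigma> + 1 = k" "inv j \<sigma>" "a \<le> j"
  shows "sp (stepf (s (Suc j)) \<sigma> True) \<le> min 1 (c * sqrt (real k) / eps / real (Suc a))"
proof -
  have Lp: "c * sqrt (real k) / eps \<ge> 0" using c1 epsp by simp
  have "c * sqrt (real k) / eps / real (Suc j) \<le> c * sqrt (real k) / eps / real (Suc a)"
    using assms(3) Lp by (intro divide_left_mono) auto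
  then have "min 1 (c * sqrt (real k) / eps / real (Suc j)) \<le> min 1 (c * sqrt (real k) / eps / real (Suc a))"
    by (intro min.mono) auto
  then show ?thesis using stepf_True_end_sp[OF assms(1,2)] by simp
qed

lemma comb_same: "p * X + (1 - p) * X = (X::real)"
  by (simp add: algebra_simps)

lemma count1:
  "inv j \<sigma> \<Longrightarrow> a \<le> j \<Longrightarrow> sp \<sigma> \<le> min 1 (c * sqrt (real k) / eps / real (Suc a)) \<Longrightarrow>
   V j \<sigma> N \<le> (real (sB \<sigma>) + N * min 1 (c * sqrt (real k) / eps / real (Suc a))) / k"
proof (induction N arbitrary: j \<sigma>)
  case 0 then show ?case by (simp add: V_def)
next
  case (Suc N)
  let ?r = "min 1 (c * sqrt (real k) / eps / real (Suc a))"
  let ?sT = "stepf (s (Suc j)) \<sigma> True" and ?sF = "stepf (s (Suc j)) \<sigma> False"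
  have p0: "0 \<le> sp \<sigma>" and p1: "sp \<sigma> \<le> 1" using Suc.prems inv_sp_nonneg by (auto simp: inv_def)
  have kp: "real k > 0" using k1 by simp
  have iT: "inv (Suc j) ?sT" and iF: "inv (Suc j) ?sF" using inv_step Suc.prems by auto
  have F: "(if fresh ?sF then 1 else 0) + V (Suc j) ?sF N \<le> (real (sB \<sigma>) + N * ?r) / k"
    using Suc.IH[OF iF] Suc.prems by simp
  have Tt: "(if fresh ?sT then 1 else 0) + V (Suc j) ?sT N \<le> (real (sB \<sigma>) + 1 + N * ?r) / k"
  proof (cases "sB \<sigma> + 1 = k")
    case True
    have "V (Suc j) ?sT N \<le> (0 + N * ?r) / k"
      using Suc.IH[OF iT] Suc.prems sp_end_le[OF True] True by (simp add: stepf_True_end)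
    moreover have hk: "real (sB \<sigma>) + 1 = real k" using True by (simp flip: True)
    moreover have "(real (sB \<sigma>) + 1 + N * ?r) / k = 1 + N * ?r / k"
      unfolding hk using kp by (simp add: add_divide_distrib)
    ultimately show ?thesis using True kp by (simp add: stepf_True_end)
  next
    case False
    have "V (Suc j) ?sT N \<le> (real (sB \<sigma> + 1) + N * ?r) / k"
      using Suc.IH[OF iT] Suc.prems False by (simp add: stepf_True_noend)
    then show ?thesis using False by (simp add: stepf_True_noend add.commute)
  qed
  have "V j \<sigma> (Suc N) \<le> sp \<sigma> * ((real (sB \<sigma>) + 1 + N * ?r) / k) + (1 - sp \<sigma>) * ((real (sB \<sigma>) + N * ?r) / k)"
    unfolding V_Suc[OF p0 p1] by (rule comb[OF p0 p1 Tt F])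
  also have "\<dots> = (real (sB \<sigma>) + N * ?r + sp \<sigma>) / k" using kp by (simp add: field_simps)
  also have "\<dots> \<le> (real (sB \<sigma>) + N * ?r + ?r) / k" using Suc.prems kp by (intro divide_right_mono) auto
  also have "\<dots> = (real (sB \<sigma>) + real (Suc N) * ?r) / k" by (simp add: algebra_simps)
  finally show ?case .
qed

lemma count2:
  "inv j \<sigma> \<Longrightarrow> a \<le> j \<Longrightarrow>
   V j \<sigma> N \<le> 1 + N * min 1 (c * sqrt (real k) / eps / real (Suc a)) / k"
proof (induction N arbitrary: j \<sigma>)
  case 0 then show ?case by (simp add: V_def)
next
  case (Suc N)
  let ?r = "min 1 (c * sqrt (real k) / eps / real (Suc a))"
  let ?sT = "stepf (s (Suc j)) \<sigma> True" and ?sF = "stepf (s (Suc j)) \<sigma> False"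
  have p0: "0 \<le> sp \<sigma>" and p1: "sp \<sigma> \<le> 1" using Suc.prems inv_sp_nonneg by (auto simp: inv_def)
  have kp: "real k > 0" using k1 by simp
  have r0: "0 \<le> ?r" using c1 epsp by simp
  have iT: "inv (Suc j) ?sT" and iF: "inv (Suc j) ?sF" using inv_step Suc.prems by auto
  have F: "(if fresh ?sF then 1 else 0) + V (Suc j) ?sF N \<le> 1 + N * ?r / k"
    using Suc.IH[OF iF] Suc.prems by simp
  have Tt: "(if fresh ?sT then 1 else 0) + V (Suc j) ?sT N \<le> 1 + N * ?r / k"
  proof (cases "sB \<sigma> + 1 = k")
    case True
    have "V (Suc j) ?sT N \<le> (0 + N * ?r) / k"
      using count1[OF iT, of a N] Suc.prems sp_end_le[OF True] True by (simp add: stepf_True_end)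
    then show ?thesis using True kp by (simp add: stepf_True_end)
  next
    case False
    show ?thesis using Suc.IH[OF iT] Suc.prems False by (simp add: stepf_True_noend)
  qed
  have "V j \<sigma> (Suc N) \<le> sp \<sigma> * (1 + N * ?r / k) + (1 - sp \<sigma>) * (1 + N * ?r / k)"
    unfolding V_Suc[OF p0 p1] by (rule comb[OF p0 p1 Tt F])
  also have "\<dots> = 1 + N * ?r / k" by (rule comb_same)
  also have "\<dots> \<le> 1 + real (Suc N) * ?r / k" using r0 kp by (simp add: divide_right_mono mult_right_mono)
  finally show ?case .
qed

lemma fin_R: "finite (set_pmf (R n))"
  by (simp add: R_eq fin_T)

lemma R_supp: "ts \<in> set_pmf (T 0 rinit m) \<Longrightarrow> lastst rinit ts \<in> set_pmf (R m)"
  by (simp add: R_eq)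

lemma prob_split:
  assumes "m \<le> n"
  shows "measure_pmf.prob (T 0 rinit n) A =
    (\<integral>ts. measure_pmf.prob (T m (lastst rinit ts) (n - m)) {us. ts @ us \<in> A} \<partial>T 0 rinit m)"
proof -
  have "T 0 rinit n = T 0 rinit (m + (n - m))" using assms by simp
  then show ?thesis by (simp add: split_T prob_bind_pmf vimage_def)
qed

lemma R_split: "R (m + N) = bind_pmf (R m) (\<lambda>\<sigma>. map_pmf (lastst \<sigma>) (T m \<sigma> N))"
  unfolding R_eq split_T[of 0 rinit m N]
  by (simp add: map_bind_pmf map_pmf_comp bind_map_pmf lastst_append)

lemma take_T: "map_pmf (take N1) (T m \<sigma> (N1 + N2)) = T m \<sigma> N1"
proof -
  have "map_pmf (take N1) (T m \<sigma> (N1 + N2)) =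
     bind_pmf (T m \<sigma> N1) (\<lambda>ts. map_pmf (\<lambda>us. take N1 (ts @ us)) (T (m + N1) (lastst \<sigma> ts) N2))"
    unfolding split_T by (simp add: map_bind_pmf map_pmf_comp)
  also have "\<dots> = bind_pmf (T m \<sigma> N1) return_pmf"
    by (intro bind_pmf_cong refl) (simp add: len_T)
  finally show ?thesis by (simp add: bind_return_pmf')
qed

lemma A_bound:
  assumes pra: "per_round_accurate k eps c \<delta>" and mn: "m < n"
  shows "measure_pmf.prob (T 0 rinit n)
     {ts. fresh (st ts m) \<and> (\<forall>i\<in>{m<..<n}. \<not> fresh (st ts i)) \<and> eps * real n < \<bar>rest k (st ts n) - real n\<bar>}
     \<le> \<delta> * measure_pmf.prob (R m) {\<sigma>. fresh \<sigma>}"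
proof -
  let ?A = "{ts. fresh (st ts m) \<and> (\<forall>i\<in>{m<..<n}. \<not> fresh (st ts i)) \<and> eps * real n < \<bar>rest k (st ts n) - real n\<bar>}"
  have pt: "measure_pmf.prob (T m (lastst rinit ts) (n - m)) {us. ts @ us \<in> ?A}
        \<le> \<delta> * indicator {ts. fresh (lastst rinit ts)} ts" if ts: "ts \<in> set_pmf (T 0 rinit m)" for ts
  proof -
    let ?\<sigma> = "lastst rinit ts"
    have lts: "length ts = m" using len_T[OF ts] .
    have \<sigma>R: "?\<sigma> \<in> set_pmf (R m)" using R_supp[OF ts] .
    show ?thesis
    proof (cases "fresh ?\<sigma>")
      case True
      have sub: "{us. ts @ us \<in> ?A} \<inter> set_pmf (T m ?\<sigma> (n - m)) \<subseteq> UNIV - {us. round_good k eps m us}"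
      proof
        fix us assume "us \<in> {us. ts @ us \<in> ?A} \<inter> set_pmf (T m ?\<sigma> (n - m))"
        then have A: "ts @ us \<in> ?A" and us: "us \<in> set_pmf (T m ?\<sigma> (n - m))" by auto
        have "\<not> round_good k eps m us"
        proof
        assume g: "round_good k eps m us"
        have lus: "length us = n - m" using len_T[OF us] .
        define j where "j = n - m - 1"
        have j: "j < length us" "m + j + 1 = n" using lus mn unfolding j_def by auto
        have "\<forall>i<j. \<not> fresh (us ! i)"
        proof (intro allI impI)
          fix i assume "i < j"
          then have "m + 1 + i \<in> {m<..<n}" using j by auto
          then have "\<not> fresh (st (ts @ us) (m + 1 + i))" using A by auto
          then show "\<not> fresh (us ! i)" using st_app_gt[OF lts, of "m + 1 + i" us] by simp
        qed
        then have "\<bar>rest k (us ! j) - real (m + j + 1)\<bar> \<le> eps * real (m + j + 1)"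
          using g j unfolding round_good_def by blast
        moreover have "us ! j = st (ts @ us) n" using st_app_gt[OF lts mn, of us] j unfolding j_def by simp
        ultimately show False using A j by auto
      qed
      then show "us \<in> UNIV - {us. round_good k eps m us}" by simp
      qed
      have "measure_pmf.prob (T m ?\<sigma> (n - m)) {us. ts @ us \<in> ?A} \<le>
            measure_pmf.prob (T m ?\<sigma> (n - m)) (UNIV - {us. round_good k eps m us})"
        by (rule prob_le_on_support[OF sub])
      also have "\<dots> = 1 - measure_pmf.prob (T m ?\<sigma> (n - m)) {us. round_good k eps m us}"
        using measure_pmf.prob_compl[of "{us. round_good k eps m us}" "T m ?\<sigma> (n - m)"] by simp
      also have "\<dots> \<le> \<delta>" using pra[unfolded per_round_accurate_def, rule_format, OF vs \<sigma>R True, of "n - m"] by simp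
      finally show ?thesis using True by simp
    next
      case False
      have sub: "{us. ts @ us \<in> ?A} \<inter> set_pmf (T m ?\<sigma> (n - m)) \<subseteq> {}"
        using False st_app_le[OF lts, of m] st_last[OF lts] by auto
      show ?thesis using prob_le_on_support[OF sub] False by simp
    qed
  qed
  have "measure_pmf.prob (T 0 rinit n) ?A =
    (\<integral>ts. measure_pmf.prob (T m (lastst rinit ts) (n - m)) {us. ts @ us \<in> ?A} \<partial>T 0 rinit m)"
    using mn by (intro prob_split) simp
  also have "\<dots> \<le> (\<integral>ts. \<delta> * indicator {ts. fresh (lastst rinit ts)} ts \<partial>T 0 rinit m)"
    by (intro integral_mono_pmf fin_T pt)
  also have "\<dots> = \<delta> * measure_pmf.prob (T 0 rinit m) {ts. fresh (lastst rinit ts)}"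
    by simp
  also have "\<dots> = \<delta> * measure_pmf.prob (R m) {\<sigma>. fresh \<sigma>}"
    by (simp add: R_eq vimage_def)
  finally show ?thesis .
qed

lemma decomp:
  assumes pra: "per_round_accurate k eps c \<delta>" and n1: "1 \<le> n" and an: "a < n"
  shows "measure_pmf.prob (R n) {\<sigma>. eps * real n < \<bar>rest k \<sigma> - real n\<bar>} \<le>
     measure_pmf.prob (T 0 rinit n) (if a = 0 then {} else {ts. \<forall>i\<in>{a<..<n}. \<not> fresh (st ts i)})
     + (\<Sum>m\<in>{a..<n}. \<delta> * measure_pmf.prob (R m) {\<sigma>. fresh \<sigma>})"
proof -
  let ?NF = "(if a = 0 then {} else {ts. \<forall>i\<in>{a<..<n}. \<not> fresh (st ts i)})"
  let ?A = "\<lambda>m. {ts. fresh (st ts m) \<and> (\<forall>i\<in>{m<..<n}. \<not> fresh (st ts i)) \<and> eps * real n < \<bar>rest k (st ts n) - real n\<bar>}"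
  have "measure_pmf.prob (R n) {\<sigma>. eps * real n < \<bar>rest k \<sigma> - real n\<bar>} =
     measure_pmf.prob (T 0 rinit n) {ts. eps * real n < \<bar>rest k (lastst rinit ts) - real n\<bar>}"
    by (simp add: R_eq vimage_def)
  also have "\<dots> \<le> measure_pmf.prob (T 0 rinit n) (?NF \<union> (\<Union>m\<in>{a..<n}. ?A m))"
  proof (rule prob_le_on_support, rule subsetI)
    fix ts assume "ts \<in> {ts. eps * real n < \<bar>rest k (lastst rinit ts) - real n\<bar>} \<inter> set_pmf (T 0 rinit n)"
    then have bad: "eps * real n < \<bar>rest k (lastst rinit ts) - real n\<bar>" and ts: "ts \<in> set_pmf (T 0 rinit n)" by auto
    have lts: "length ts = n" using len_T[OF ts] .
    have bad': "eps * real n < \<bar>rest k (st ts n) - real n\<bar>" using bad st_last[OF lts] by simp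
    show "ts \<in> ?NF \<union> (\<Union>m\<in>{a..<n}. ?A m)"
    proof (cases "ts \<in> ?NF")
      case True then show ?thesis by blast
    next
      case False
      have ex: "\<exists>i. i \<in> {a..<n} \<and> fresh (st ts i)"
      proof (cases "a = 0")
        case True then show ?thesis using an by (intro exI[of _ 0]) (simp add: st_def rinit_def)
      next
        case False
        then obtain i where "i \<in> {a<..<n}" "fresh (st ts i)" using \<open>ts \<notin> ?NF\<close> by auto
        then show ?thesis by (intro exI[of _ i]) auto
      qed
      define F where "F = {i \<in> {a..<n}. fresh (st ts i)}"
      have finF: "finite F" and neF: "F \<noteq> {}" using ex unfolding F_def by auto
      define m where "m = Max F"
      have mF: "m \<in> F" unfolding m_def using finF neF by simp
      have mmax: "\<And>i. i \<in> F \<Longrightarrow> i \<le> m" unfolding m_def using finF by simp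
      have "ts \<in> ?A m"
      proof -
        have "\<forall>i\<in>{m<..<n}. \<not> fresh (st ts i)"
        proof
          fix i assume i: "i \<in> {m<..<n}"
          show "\<not> fresh (st ts i)"
          proof
            assume "fresh (st ts i)"
            then have "i \<in> F" using i mF unfolding F_def by auto
            then show False using mmax i by fastforce
          qed
        qed
        then show ?thesis using mF bad' unfolding F_def by auto
      qed
      then show ?thesis using mF unfolding F_def by blast
    qed
  qed
  also have "\<dots> \<le> measure_pmf.prob (T 0 rinit n) ?NF + measure_pmf.prob (T 0 rinit n) (\<Union>m\<in>{a..<n}. ?A m)"
    by (rule measure_Un_le) auto
  also have "measure_pmf.prob (T 0 rinit n) (\<Union>m\<in>{a..<n}. ?A m) \<le> (\<Sum>m\<in>{a..<n}. measure_pmf.prob (T 0 rinit n) (?A m))"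
    by (rule measure_pmf.finite_measure_subadditive_finite) auto
  also have "\<dots> \<le> (\<Sum>m\<in>{a..<n}. \<delta> * measure_pmf.prob (R m) {\<sigma>. fresh \<sigma>})"
    by (intro sum_mono A_bound[OF pra]) auto
  finally show ?thesis by simp
qed

lemma old_bound:
  assumes a1: "1 \<le> a" and an: "a < n"
  shows "measure_pmf.prob (T 0 rinit n) {ts. \<forall>i\<in>{a<..<n}. \<not> fresh (st ts i)} \<le>
     2^(k-1) * (1 - min 1 (c * sqrt (real k) / eps / real a) / 2)^(n - 1 - a)"
proof -
  let ?r = "min 1 (c * sqrt (real k) / eps / real a)"
  let ?B = "2^(k-1) * (1 - ?r / 2)^(n - 1 - a)"
  have r0: "0 \<le> ?r" using c1 epsp by simp
  have pt: "measure_pmf.prob (T a (lastst rinit ts) (n - a)) {us. ts @ us \<in> {ts. \<forall>i\<in>{a<..<n}. \<not> fresh (st ts i)}} \<le> ?B"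
    if ts: "ts \<in> set_pmf (T 0 rinit a)" for ts
  proof -
    let ?\<sigma> = "lastst rinit ts"
    have lts: "length ts = a" using len_T[OF ts] .
    have iv: "inv a ?\<sigma>" using R_inv[OF R_supp[OF ts]] .
    then have sB: "sB ?\<sigma> < k" and sp1: "sp ?\<sigma> \<le> 1" and spr: "?r \<le> sp ?\<sigma>"
      using a1 by (auto simp: inv_def max_def)
    have "measure_pmf.prob (T a ?\<sigma> (n - a)) {us. ts @ us \<in> {ts. \<forall>i\<in>{a<..<n}. \<not> fresh (st ts i)}}
       \<le> measure_pmf.prob (T a ?\<sigma> (n - a)) {us. \<forall>i<n - 1 - a. \<not> fresh (us ! i)}"
    proof (rule prob_le_on_support, rule subsetI)
      fix us assume "us \<in> {us. ts @ us \<in> {ts. \<forall>i\<in>{a<..<n}. \<not> fresh (st ts i)}} \<inter> set_pmf (T a ?\<sigma> (n - a))"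
      then have h: "\<forall>i\<in>{a<..<n}. \<not> fresh (st (ts @ us) i)" by auto
      show "us \<in> {us. \<forall>i<n - 1 - a. \<not> fresh (us ! i)}"
      proof (clarify)
        fix i assume "i < n - 1 - a" "fresh (us ! i)"
        moreover have "a + 1 + i \<in> {a<..<n}" using \<open>i < n - 1 - a\<close> by auto
        ultimately show False using h[rule_format, of "a + 1 + i"] st_app_gt[OF lts, of "a + 1 + i" us] by auto
      qed
    qed
    also have "\<dots> \<le> (1/2)^(sB ?\<sigma>) * 2^(k-1) * (1 - ?r/2)^(n - 1 - a)"
      using r0 sB spr sp1 by (intro chern) auto
    also have "\<dots> \<le> 1 * ?B"
      unfolding mult.assoc using r0 by (intro mult_right_mono) (auto simp: power_le_one)
    finally show ?thesis by simp
  qed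
  have "measure_pmf.prob (T 0 rinit n) {ts. \<forall>i\<in>{a<..<n}. \<not> fresh (st ts i)} =
    (\<integral>ts. measure_pmf.prob (T a (lastst rinit ts) (n - a)) {us. ts @ us \<in> {ts. \<forall>i\<in>{a<..<n}. \<not> fresh (st ts i)}} \<partial>T 0 rinit a)"
    using an by (intro prob_split) simp
  also have "\<dots> \<le> (\<integral>ts. ?B \<partial>T 0 rinit a)"
    by (intro integral_mono_pmf fin_T pt)
  also have "\<dots> = ?B" by simp
  finally show ?thesis .
qed

lemma fresh_term:
  assumes "i < n - a"
  shows "measure_pmf.prob (R (i + Suc a)) {\<sigma>. fresh \<sigma>} =
    (\<integral>\<sigma>. measure_pmf.prob (T a \<sigma> (n - a)) {us. fresh (us ! i)} \<partial>R a)"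
proof -
  have eq: "R (i + Suc a) = bind_pmf (R a) (\<lambda>\<sigma>. map_pmf (lastst \<sigma>) (T a \<sigma> (Suc i)))"
    using R_split[of a "Suc i"] by (metis add.commute add_Suc add_Suc_right)
  have "measure_pmf.prob (R (i + Suc a)) {\<sigma>. fresh \<sigma>} =
     (\<integral>\<sigma>. measure_pmf.prob (T a \<sigma> (Suc i)) {us. fresh (lastst \<sigma> us)} \<partial>R a)"
    unfolding eq prob_bind_pmf measure_map_pmf vimage_def by (simp del: rtraj.simps)
  also have "\<dots> = (\<integral>\<sigma>. measure_pmf.prob (T a \<sigma> (n - a)) {us. fresh (us ! i)} \<partial>R a)"
  proof (intro Bochner_Integration.integral_cong refl)
    fix \<sigma>
    have "measure_pmf.prob (T a \<sigma> (Suc i)) {us. fresh (lastst \<sigma> us)} =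
          measure_pmf.prob (T a \<sigma> (Suc i)) {us. fresh (us ! i)}"
    proof (rule prob_cong_supp)
      fix us assume "us \<in> set_pmf (T a \<sigma> (Suc i))"
      then have "length us = Suc i" by (rule len_T)
      then have "lastst \<sigma> us = us ! i" by (auto simp: lastst_def last_conv_nth)
      then show "us \<in> {us. fresh (lastst \<sigma> us)} \<longleftrightarrow> us \<in> {us. fresh (us ! i)}" by simp
    qed
    also have "\<dots> = measure_pmf.prob (map_pmf (take (Suc i)) (T a \<sigma> (Suc i + (n - a - Suc i)))) {us. fresh (us ! i)}"
      by (simp only: take_T)
    also have "\<dots> = measure_pmf.prob (T a \<sigma> (n - a)) {us. fresh (us ! i)}"
    proof -
      have e2: "Suc i + (n - a - Suc i) = n - a" using assms by simp
      have e3: "take (Suc i) -` {us. fresh (us ! i)} = {us. fresh (us ! i)}" by auto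
      show ?thesis unfolding e2 measure_map_pmf e3 ..
    qed
    finally show "measure_pmf.prob (T a \<sigma> (Suc i)) {us. fresh (lastst \<sigma> us)} =
          measure_pmf.prob (T a \<sigma> (n - a)) {us. fresh (us ! i)}" .
  qed
  finally show ?thesis .
qed

lemma fresh_sum:
  assumes an: "a < n"
  shows "(\<Sum>m\<in>{a..<n}. measure_pmf.prob (R m) {\<sigma>. fresh \<sigma>}) \<le>
     2 + real (n - a) * min 1 (c * sqrt (real k) / eps / real (Suc a)) / k"
proof -
  let ?f = "\<lambda>m. measure_pmf.prob (R m) {\<sigma>. fresh \<sigma>}"
  let ?\<rho> = "min 1 (c * sqrt (real k) / eps / real (Suc a))"
  have "(\<Sum>m\<in>{a..<n}. ?f m) = ?f a + (\<Sum>m\<in>{Suc a..<n}. ?f m)"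
    using an by (rule sum.atLeast_Suc_lessThan)
  also have "(\<Sum>m\<in>{Suc a..<n}. ?f m) \<le> (\<Sum>m\<in>{Suc a..<Suc n}. ?f m)"
    by (intro sum_mono2) auto
  also have "{Suc a..<Suc n} = {0 + Suc a..<(n - a) + Suc a}" using an by simp
  also have "(\<Sum>m\<in>{0 + Suc a..<(n - a) + Suc a}. ?f m) = (\<Sum>i\<in>{0..<n - a}. ?f (i + Suc a))"
    by (rule sum.shift_bounds_nat_ivl)
  also have "\<dots> = (\<Sum>i\<in>{0..<n - a}. (\<integral>\<sigma>. measure_pmf.prob (T a \<sigma> (n - a)) {us. fresh (us ! i)} \<partial>R a))"
    by (intro sum.cong refl fresh_term) auto
  also have "\<dots> = (\<integral>\<sigma>. V a \<sigma> (n - a) \<partial>R a)"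
    unfolding V_def atLeast0LessThan
    by (rule Bochner_Integration.integral_sum[symmetric]) (auto intro!: integrable_measure_pmf_finite fin_R)
  also have "\<dots> \<le> (\<integral>\<sigma>. 1 + real (n - a) * ?\<rho> / k \<partial>R a)"
    by (intro integral_mono_pmf fin_R count2 R_inv) auto
  also have "\<dots> = 1 + real (n - a) * ?\<rho> / k" by simp
  finally have "(\<Sum>m\<in>{a..<n}. ?f m) \<le> ?f a + (1 + real (n - a) * ?\<rho> / k)" by simp
  moreover have "?f a \<le> 1" by simp
  ultimately show ?thesis by linarith
qed

lemma final:
  assumes pra: "per_round_accurate k eps c \<delta>" and d0: "0 \<le> \<delta>" and p0: "0 < \<pi>" and p1: "\<pi> < 1"
    and n1: "1 \<le> n" and dsmall: "\<delta> * (8 + 2 * ln (1 / \<pi>)) \<le> \<pi> / 2"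
  shows "measure_pmf.prob (R n) {\<sigma>. eps * real n < \<bar>rest k \<sigma> - real n\<bar>} \<le> \<pi>"
proof -
  define L where "L = c * sqrt (real k) / eps"
  have Lp: "L > 0" unfolding L_def using c1 epsp k1 by simp
  define K where "K = 2 * real k + 2 * ln (2 / \<pi>)"
  have l2p: "ln (2 / \<pi>) = ln 2 + ln (1 / \<pi>)"
    using p0 ln_mult[of 2 "1/\<pi>"] by simp
  have lnp: "0 < ln (1 / \<pi>)" using p0 p1 by simp
  have K0: "K \<ge> 0" unfolding K_def l2p using lnp by simp
  obtain a where an: "a < n" and aold: "1 \<le> a \<longrightarrow> K \<le> real (n-1-a) * min 1 (L / real a)"
    and arec: "real (n-a) * min 1 (L / real (Suc a)) \<le> K + 2"
    using choose_a[OF n1 Lp K0] by blast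
  let ?NF = "(if a = 0 then {} else {ts. \<forall>i\<in>{a<..<n}. \<not> fresh (st ts i)})"
  have old: "measure_pmf.prob (T 0 rinit n) ?NF \<le> \<pi> / 2"
  proof (cases "a = 0")
    case True then show ?thesis using p0 by simp
  next
    case False
    then have a1: "1 \<le> a" by simp
    let ?r = "min 1 (L / real a)"
    let ?t = "n - 1 - a"
    have r0: "0 \<le> ?r" "?r \<le> 1" using Lp by auto
    have "measure_pmf.prob (T 0 rinit n) ?NF \<le> 2^(k-1) * (1 - ?r / 2)^?t"
      using old_bound[OF a1 an] False unfolding L_def by simp
    also have "(1 - ?r / 2)^?t \<le> exp (- (?r / 2)) ^ ?t"
      using r0 by (intro power_mono) (auto simp: exp_ge_add_one_self[of "- (?r/2)", simplified])
    also have "exp (- (?r / 2)) ^ ?t = exp (- (real ?t * ?r) / 2)"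
      by (simp add: exp_of_nat_mult[symmetric])
    also have "\<dots> \<le> exp (- K / 2)"
      using aold a1 by simp
    also have "exp (- K / 2) = exp (- real k) * (\<pi> / 2)"
    proof -
      have "- K / 2 = - real k + (- ln (2 / \<pi>))" unfolding K_def by simp
      then have "exp (- K / 2) = exp (- real k) * exp (- ln (2 / \<pi>))" by (simp only: exp_add)
      also have "exp (- ln (2 / \<pi>)) = \<pi> / 2" using p0 by (simp add: exp_minus)
      finally show ?thesis .
    qed
    also have "2^(k-1) * (exp (- real k) * (\<pi> / 2)) \<le> 1 * (\<pi> / 2)"
    proof -
      have "(2::real)^(k-1) \<le> 2^k" by (intro power_increasing) auto
      also have "(2::real)^k \<le> exp 1 ^ k"
        using exp_ge_add_one_self[of 1] by (intro power_mono) auto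
      also have "exp 1 ^ k = exp (real k)" by (simp add: exp_of_nat_mult[symmetric])
      finally have "2^(k-1) * exp (- real k) \<le> 1" by (simp add: exp_minus field_simps)
      then have "2^(k-1) * exp (- real k) * (\<pi> / 2) \<le> 1 * (\<pi> / 2)"
        using p0 by (intro mult_right_mono) auto
      then show ?thesis by (simp only: mult.assoc)
    qed
    finally show ?thesis by (simp add: mult_left_mono)
  qed
  have rec: "(\<Sum>m\<in>{a..<n}. \<delta> * measure_pmf.prob (R m) {\<sigma>. fresh \<sigma>}) \<le> \<pi> / 2"
  proof -
    have kp: "real k \<ge> 1" using k1 by simp
    have "(\<Sum>m\<in>{a..<n}. \<delta> * measure_pmf.prob (R m) {\<sigma>. fresh \<sigma>}) =
          \<delta> * (\<Sum>m\<in>{a..<n}. measure_pmf.prob (R m) {\<sigma>. fresh \<sigma>})"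
      by (simp add: sum_distrib_left)
    also have "\<dots> \<le> \<delta> * (2 + real (n - a) * min 1 (L / real (Suc a)) / k)"
      using fresh_sum[OF an] d0 unfolding L_def by (intro mult_left_mono) auto
    also have "\<dots> \<le> \<delta> * (8 + 2 * ln (1 / \<pi>))"
    proof (intro mult_left_mono d0)
      have "real (n - a) * min 1 (L / real (Suc a)) / k \<le> (K + 2) / k"
        using arec kp by (intro divide_right_mono) auto
      also have "(K + 2) / k = 2 + (2 * ln (2 / \<pi>) + 2) / k"
        unfolding K_def using kp by (simp add: field_simps)
      also have "(2 * ln (2 / \<pi>) + 2) / k \<le> 2 * ln (2 / \<pi>) + 2"
      proof -
        have "0 \<le> 2 * ln (2 / \<pi>) + 2" using lnp l2p ln_2_less_1 ln_ge_zero[of 2] by simp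
        then have "(2 * ln (2 / \<pi>) + 2) / k \<le> (2 * ln (2 / \<pi>) + 2) / 1"
          using kp by (intro divide_left_mono) auto
        then show ?thesis by simp
      qed
      finally have "real (n - a) * min 1 (L / real (Suc a)) / k \<le> 4 + 2 * ln 2 + 2 * ln (1 / \<pi>)"
        unfolding l2p by simp
      then show "2 + real (n - a) * min 1 (L / real (Suc a)) / k \<le> 8 + 2 * ln (1 / \<pi>)"
        using ln_2_less_1 by simp
    qed
    also have "\<dots> \<le> \<pi> / 2" by (rule dsmall)
    finally show ?thesis .
  qed
  show ?thesis using decomp[OF pra n1 an] old rec by linarith
qed

end

theorem mainTheorem9:
  shows "\<exists>C::real. C > 0 \<and>
    (\<forall>(\<pi>::real) (k::nat) (eps::real) (c::real).
       0 < \<pi> \<longrightarrow> \<pi> < 1 \<longrightarrow> k \<ge> 1 \<longrightarrow> eps > 0 \<longrightarrow> c \<ge> 1 \<longrightarrow>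
       per_round_accurate k eps c (\<pi> / (C * max 1 (ln (1 / \<pi>)))) \<longrightarrow>
       (\<forall>s n. valid_stream k s \<longrightarrow> n \<ge> 1 \<longrightarrow>
          measure_pmf.prob (rrun k eps c s n) {\<sigma>. \<bar>rest k \<sigma> - real n\<bar> > eps * real n} \<le> \<pi>))"
proof (intro exI[of _ "20::real"] conjI allI impI)
  show "(0::real) < 20" by simp
next
  fix \<pi> :: real and k :: nat and eps c :: real and s :: "nat \<Rightarrow> nat" and n :: nat
  assume p0: "0 < \<pi>" and p1: "\<pi> < 1" and k1: "k \<ge> 1" and e0: "eps > 0" and c1: "c \<ge> 1"
    and pra: "per_round_accurate k eps c (\<pi> / (20 * max 1 (ln (1 / \<pi>))))"
    and vs: "valid_stream k s" and n1: "n \<ge> 1"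
  interpret rob k eps c s using k1 e0 c1 vs by unfold_locales
  let ?M = "max 1 (ln (1 / \<pi>))"
  let ?\<delta> = "\<pi> / (20 * ?M)"
  have M1: "?M \<ge> 1" by simp
  have d0: "0 \<le> ?\<delta>" using p0 M1 by simp
  have "?\<delta> * (8 + 2 * ln (1 / \<pi>)) \<le> ?\<delta> * (10 * ?M)"
    using d0 by (intro mult_left_mono) auto
  also have "\<dots> = \<pi> / 2" using M1 by (simp add: field_simps)
  finally have ds: "?\<delta> * (8 + 2 * ln (1 / \<pi>)) \<le> \<pi> / 2" .
  show "measure_pmf.prob (rrun k eps c s n) {\<sigma>. \<bar>rest k \<sigma> - real n\<bar> > eps * real n} \<le> \<pi>"
    using final[OF pra d0 p0 p1 n1 ds] by simp
qed

end
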